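(* Let $\Gamma=(N,(S_i)_{i\in N},(u_i)_{i\in N})$ be a finite normal-form game with $N=\{1,\dots,n\}$. Let $\pi=(\pi_1,\dots,\pi_n)$ and $\pi'=(\pi_1',\dots,\pi_n')$ be profiles of tolerance distributions, where for each $i$ both $\pi_i$ and $\pi_i'$ are probability distributions with finite support contained in $[0,\infty)$. Suppose $\pi'$ stochastically dominates $\pi$. Then every $\pi$-tolerant equilibrium of $\Gamma$ is a $\pi'$-tolerant equilibrium of $\Gamma$.
   Context: $S_i$ is the finite set of pure strategies of player $i$, and $S=S_1\times\cdots\times S_n$. Each $u_i:S\to\mathbb{R}$ is extended multilinearly to mixed-strategy profiles. $\Sigma_i$ denotes the set of mixed strategies (probability distributions on $S_i$) of player $i$; for a profile $\sigma=(\sigma_1,\dots,\sigma_n)$, $\sigma_{-i}$ denotes the profile of all components except the $i$-th. A pure strategy $s_i$ is consistent with a tolerance $t\ge 0$ and a profile $\sigma_{-i}$ if $s_i$ is a $t$-best response to $\sigma_{-i}$, i.e., $u_i(s_i',\sigma_{-i})\le u_i(s_i,\sigma_{-i})+t$ for every $s_i'\in S_i$. Given a profile $\pi=(\pi_1,\dots,\pi_n)$, where $\pi_i$ is a distribution on a finite set $T_i\subset[0,\infty)$ of possible tolerances ("types") of player $i$, a mixed-strategy profile $\sigma$ is a $\pi$-tolerant equilibrium if for each player $i$ there is a map $g_i$ from $T_i$ to $\Sigma_i$ such that (E1) for every $t\in T_i$, every pure strategy in the support of $g_i(t)$ is consistent with $t$ and $\sigma_{-i}$; and (E2) $\sum_{t\in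 T_i}\pi_i(t)\,g_i(t)=\sigma_i$ (as mixed strategies). For a distribution $\pi_i$, let $F^{\pi_i}(t)=\sum_{t'\le t}\pi_i(t')$. $\pi_i'$ stochastically dominates $\pi_i$ if $F^{\pi_i'}(t)\le F^{\pi_i}(t)$ for all $t$; $\pi'$ stochastically dominates $\pi$ if $\pi_i'$ stochastically dominates $\pi_i$ for every $i$. *)

theory Defs
  imports "HOL-Probability.Probability"
begin

definition mixed_strats :: "'s set \<Rightarrow> ('s \<Rightarrow> real) set" where
  "mixed_strats A = {x. (\<forall>s. 0 \<le> x s) \<and> (\<forall>s. s \<notin> A \<longrightarrow> x s = 0) \<and> sum x A = 1}"

definition pure_as_mixed :: "'s \<Rightarrow> 's \<Rightarrow> real" where
  "pure_as_mixed s = (\<lambda>s'. if s' = s then 1 else 0)"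

definition exp_util :: "nat \<Rightarrow> (nat \<Rightarrow> 's set) \<Rightarrow> (nat \<Rightarrow> (nat \<Rightarrow> 's) \<Rightarrow> real)
    \<Rightarrow> nat \<Rightarrow> (nat \<Rightarrow> 's \<Rightarrow> real) \<Rightarrow> real" where
  "exp_util n S u i \<sigma> = (\<Sum>p\<in>PiE {1..n} S. (\<Prod>j\<in>{1..n}. \<sigma> j (p j)) * u i p)"

text \<open>s is consistent with tolerance t and sigma_{-i}: s is a t-best response.
  (sigma(i := x) replaces the i-th component, so only sigma_{-i} matters.)\<close>
definition consistent :: "nat \<Rightarrow> (nat \<Rightarrow> 's set) \<Rightarrow> (nat \<Rightarrow> (nat \<Rightarrow> 's) \<Rightarrow> real)
    \<Rightarrow> nat \<Rightarrow> 's \<Rightarrow> real \<Rightarrow> (nat \<Rightarrow> 's \<Rightarrow> real) \<Rightarrow> bool" where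
  "consistent n S u i s t \<sigma> \<longleftrightarrow>
     (\<forall>s'\<in>S i. exp_util n S u i (\<sigma>(i := pure_as_mixed s'))
                \<le> exp_util n S u i (\<sigma>(i := pure_as_mixed s)) + t)"

text \<open>Tolerance distributions pi i are pmfs on reals; the type set T_i is set_pmf (pi i).\<close>
definition tolerant_eq :: "nat \<Rightarrow> (nat \<Rightarrow> 's set) \<Rightarrow> (nat \<Rightarrow> (nat \<Rightarrow> 's) \<Rightarrow> real)
    \<Rightarrow> (nat \<Rightarrow> real pmf) \<Rightarrow> (nat \<Rightarrow> 's \<Rightarrow> real) \<Rightarrow> bool" where
  "tolerant_eq n S u \<pi> \<sigma> \<longleftrightarrow>
     (\<forall>i\<in>{1..n}. \<sigma> i \<in> mixed_strats (S i)) \<and>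
     (\<forall>i\<in>{1..n}. \<exists>g :: real \<Rightarrow> 's \<Rightarrow> real.
        (\<forall>t\<in>set_pmf (\<pi> i). g t \<in> mixed_strats (S i) \<and>
            (\<forall>s\<in>S i. 0 < g t s \<longrightarrow> consistent n S u i s t \<sigma>)) \<and>
        (\<forall>s. (\<Sum>t\<in>set_pmf (\<pi> i). pmf (\<pi> i) t * g t s) = \<sigma> i s))"

definition tol_cdf :: "real pmf \<Rightarrow> real \<Rightarrow> real" where
  "tol_cdf p t = (\<Sum>t'\<in>{t'\<in>set_pmf p. t' \<le> t}. pmf p t')"

definition stoch_dom :: "real pmf \<Rightarrow> real pmf \<Rightarrow> bool" where
  "stoch_dom p' p \<longleftrightarrow> (\<forall>t. tol_cdf p' t \<le> tol_cdf p t)"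

end

theory Submission
  imports Defs
begin

lemma coupling:
  fixes A B :: "real set" and p q :: "real \<Rightarrow> real"
  assumes fA: "finite A" and fB: "finite B"
  shows "\<forall>x. 0 \<le> p x \<Longrightarrow> \<forall>x. 0 \<le> q x \<Longrightarrow> sum p A = sum q B \<Longrightarrow>
    \<forall>c. sum p {a\<in>A. c<a} \<le> sum q {b\<in>B. c<b} \<Longrightarrow>
    \<exists>\<gamma>. (\<forall>a b. 0 \<le> \<gamma> a b) \<and> (\<forall>a b. 0 < \<gamma> a b \<longrightarrow> a \<le> b) \<and>
        (\<forall>a\<in>A. sum (\<gamma> a) B = p a) \<and> (\<forall>b\<in>B. (\<Sum>a\<in>A. \<gamma> a b) = q b)"
proof (induction "card {a\<in>A. 0<p a} + card {b\<in>B. 0<q b}" arbitrary: p q rule: less_induct)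
  case less
  note pn = less.prems(1) and qn = less.prems(2) and eq = less.prems(3) and dom = less.prems(4)
  show ?case
  proof (cases "{a\<in>A. 0<p a} = {}")
    case True
    hence "\<forall>a\<in>A. \<not> 0 < p a" by auto
    hence p0: "\<forall>a\<in>A. p a = 0" using pn by (auto intro: order.antisym simp: not_less)
    hence "sum q B = 0" using eq by simp
    hence q0: "\<forall>b\<in>B. q b = 0" using qn fB by (simp add: sum_nonneg_eq_0_iff)
    show ?thesis by (rule exI[of _ "\<lambda>_ _. 0"]) (simp add: p0 q0)
  next
    case False
    define Ap where "Ap = {a\<in>A. 0<p a}"
    define Bp where "Bp = {b\<in>B. 0<q b}"
    have fAp: "finite Ap" "Ap \<noteq> {}" using fA False Ap_def by auto
    then obtain a1 where a1: "a1 \<in> A" "0 < p a1" unfolding Ap_def by auto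
    have "p a1 \<le> sum p A" using member_le_sum[of a1 A p] a1 fA pn by auto
    hence "0 < sum q B" using a1 eq by linarith
    have "Bp \<noteq> {}"
    proof
      assume "Bp = {}"
      hence "\<forall>b\<in>B. \<not> 0 < q b" unfolding Bp_def by auto
      hence "\<forall>b\<in>B. q b = 0" using qn by (auto intro: order.antisym simp: not_less)
      hence "sum q B = 0" by simp
      thus False using \<open>0 < sum q B\<close> by simp
    qed
    have fBp: "finite Bp" "Bp \<noteq> {}" using fB Bp_def \<open>Bp \<noteq> {}\<close> by auto
    define a0 where "a0 = Max Ap"
    define b0 where "b0 = Max Bp"
    have a0: "a0 \<in> A" "0 < p a0" using Max_in[OF fAp] unfolding a0_def Ap_def by auto
    have b0: "b0 \<in> B" "0 < q b0" using Max_in[OF fBp] unfolding b0_def Bp_def by auto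
    have a0max: "\<And>a. a \<in> A \<Longrightarrow> a0 < a \<Longrightarrow> p a = 0"
    proof -
      fix a assume "a \<in> A" "a0 < a"
      show "p a = 0"
      proof (rule ccontr)
        assume "p a \<noteq> 0" hence "a \<in> Ap" using pn \<open>a\<in>A\<close> Ap_def by (simp add: less_le)
        hence "a \<le> a0" using fAp a0_def by simp
        thus False using \<open>a0<a\<close> by simp
      qed
    qed
    have b0max: "\<And>b. b \<in> B \<Longrightarrow> b0 < b \<Longrightarrow> q b = 0"
    proof -
      fix b assume "b \<in> B" "b0 < b"
      show "q b = 0"
      proof (rule ccontr)
        assume "q b \<noteq> 0" hence "b \<in> Bp" using qn \<open>b\<in>B\<close> Bp_def by (simp add: less_le)
        hence "b \<le> b0" using fBp b0_def by simp
        thus False using \<open>b0<b\<close> by simp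
      qed
    qed
    have ab: "a0 \<le> b0"
    proof (rule ccontr)
      assume "\<not> a0 \<le> b0"
      hence "a0 \<in> {a\<in>A. b0<a}" using a0 by auto
      hence "p a0 \<le> sum p {a\<in>A. b0<a}" using member_le_sum[of a0 "{a\<in>A. b0<a}" p] fA pn by auto
      moreover have "sum q {b\<in>B. b0<b} = 0" using b0max by (intro sum.neutral) auto
      ultimately show False using dom a0 by (metis leD order_le_less_trans)
    qed
    define m where "m = min (p a0) (q b0)"
    have m: "0 < m" "m \<le> p a0" "m \<le> q b0" using a0 b0 m_def by auto
    define p' where "p' = (\<lambda>x. p x - (if x = a0 then m else 0))"
    define q' where "q' = (\<lambda>x. q x - (if x = b0 then m else 0))"
    have pn': "\<forall>x. 0 \<le> p' x" using pn m p'_def by auto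
    have qn': "\<forall>x. 0 \<le> q' x" using qn m q'_def by auto
    have sp: "\<And>X. finite X \<Longrightarrow> sum p' X = sum p X - (if a0 \<in> X then m else 0)"
      unfolding p'_def by (simp add: sum_subtractf)
    have sq: "\<And>X. finite X \<Longrightarrow> sum q' X = sum q X - (if b0 \<in> X then m else 0)"
      unfolding q'_def by (simp add: sum_subtractf)
    have eq': "sum p' A = sum q' B" using sp[OF fA] sq[OF fB] a0 b0 eq by simp
    have dom': "\<forall>c. sum p' {a\<in>A. c<a} \<le> sum q' {b\<in>B. c<b}"
    proof
      fix c
      show "sum p' {a\<in>A. c<a} \<le> sum q' {b\<in>B. c<b}"
      proof (cases "c < a0")
        case True
        have "sum p' {a\<in>A. c<a} = sum p {a\<in>A. c<a} - m"
          using sp[of "{a\<in>A. c<a}"] fA a0 True by simp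
        moreover have "sum q' {b\<in>B. c<b} = sum q {b\<in>B. c<b} - m"
          using sq[of "{b\<in>B. c<b}"] fB b0 True ab by simp
        ultimately show ?thesis using dom by (metis diff_right_mono)
      next
        case False
        have "sum p' {a\<in>A. c<a} = 0"
          using a0max False unfolding p'_def by (intro sum.neutral) auto
        moreover have "0 \<le> sum q' {b\<in>B. c<b}" using qn' by (simp add: sum_nonneg)
        ultimately show ?thesis by simp
      qed
    qed
    have sub1: "{a\<in>A. 0<p' a} \<subseteq> {a\<in>A. 0<p a}" using p'_def m by auto
    have sub2: "{b\<in>B. 0<q' b} \<subseteq> {b\<in>B. 0<q b}" using q'_def m by auto
    have z: "p' a0 = 0 \<or> q' b0 = 0" using p'_def q'_def m_def by auto
    have psub: "{a\<in>A. 0<p' a} \<subset> {a\<in>A. 0<p a} \<or> {b\<in>B. 0<q' b} \<subset> {b\<in>B. 0<q b}"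
    proof (cases "p' a0 = 0")
      case True
      hence "a0 \<notin> {a\<in>A. 0<p' a}" by simp
      moreover have "a0 \<in> {a\<in>A. 0<p a}" using a0 by simp
      ultimately show ?thesis using sub1 by blast
    next
      case False
      hence "q' b0 = 0" using z by simp
      hence "b0 \<notin> {b\<in>B. 0<q' b}" by simp
      moreover have "b0 \<in> {b\<in>B. 0<q b}" using b0 by simp
      ultimately show ?thesis using sub2 by blast
    qed
    hence "card {a\<in>A. 0<p' a} + card {b\<in>B. 0<q' b} < card {a\<in>A. 0<p a} + card {b\<in>B. 0<q b}"
    proof -
      have f1: "finite {a\<in>A. 0<p a}" "finite {b\<in>B. 0<q b}" using fA fB by auto
      have l1: "card {a\<in>A. 0<p' a} \<le> card {a\<in>A. 0<p a}" by (rule card_mono[OF f1(1) sub1])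
      have l2: "card {b\<in>B. 0<q' b} \<le> card {b\<in>B. 0<q b}" by (rule card_mono[OF f1(2) sub2])
      from psub show ?thesis
      proof
        assume "{a\<in>A. 0<p' a} \<subset> {a\<in>A. 0<p a}"
        hence "card {a\<in>A. 0<p' a} < card {a\<in>A. 0<p a}" by (rule psubset_card_mono[OF f1(1)])
        thus ?thesis using l2 by linarith
      next
        assume "{b\<in>B. 0<q' b} \<subset> {b\<in>B. 0<q b}"
        hence "card {b\<in>B. 0<q' b} < card {b\<in>B. 0<q b}" by (rule psubset_card_mono[OF f1(2)])
        thus ?thesis using l1 by linarith
      qed
    qed
    from less.hyps[OF this pn' qn' eq' dom'] obtain \<gamma> where
      g: "\<forall>a b. 0 \<le> \<gamma> a b" "\<forall>a b. 0 < \<gamma> a b \<longrightarrow> a \<le> b"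
        "\<forall>a\<in>A. sum (\<gamma> a) B = p' a" "\<forall>b\<in>B. (\<Sum>a\<in>A. \<gamma> a b) = q' b" by blast
    define \<delta> where "\<delta> = (\<lambda>a b. \<gamma> a b + (if a = a0 \<and> b = b0 then m else 0))"
    show ?thesis
    proof (rule exI[of _ \<delta>], intro conjI allI ballI impI)
      fix a b show "0 \<le> \<delta> a b" using g m \<delta>_def by auto
    next
      fix a b assume "0 < \<delta> a b" thus "a \<le> b" using g ab \<delta>_def by (auto split: if_splits)
    next
      fix a assume "a \<in> A"
      have "sum (\<delta> a) B = sum (\<gamma> a) B + (\<Sum>b\<in>B. if a = a0 \<and> b = b0 then m else 0)"
        unfolding \<delta>_def by (simp add: sum.distrib)
      also have "(\<Sum>b\<in>B. if a = a0 \<and> b = b0 then m else 0) = (if a = a0 then m else 0)"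
        using b0 fB by (cases "a = a0") simp_all
      also have "sum (\<gamma> a) B + (if a = a0 then m else 0) = p a" using g(3) \<open>a\<in>A\<close> unfolding p'_def by simp
      finally show "sum (\<delta> a) B = p a" .
    next
      fix b assume "b \<in> B"
      have "(\<Sum>a\<in>A. \<delta> a b) = (\<Sum>a\<in>A. \<gamma> a b) + (\<Sum>a\<in>A. if a = a0 \<and> b = b0 then m else 0)"
        unfolding \<delta>_def by (simp add: sum.distrib)
      also have "(\<Sum>a\<in>A. if a = a0 \<and> b = b0 then m else 0) = (if b = b0 then m else 0)"
        using a0 fA by (cases "b = b0") simp_all
      also have "(\<Sum>a\<in>A. \<gamma> a b) + (if b = b0 then m else 0) = q b" using g(4) \<open>b\<in>B\<close> unfolding q'_def by simp
      finally show "(\<Sum>a\<in>A. \<delta> a b) = q b" .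
    qed
  qed
qed

lemma consistent_mono:
  assumes "consistent n S u i s t \<sigma>" "t \<le> t'"
  shows "consistent n S u i s t' \<sigma>"
  unfolding consistent_def
proof
  fix s' assume "s' \<in> S i"
  with assms(1) have "exp_util n S u i (\<sigma>(i := pure_as_mixed s'))
                \<le> exp_util n S u i (\<sigma>(i := pure_as_mixed s)) + t" unfolding consistent_def by blast
  thus "exp_util n S u i (\<sigma>(i := pure_as_mixed s'))
                \<le> exp_util n S u i (\<sigma>(i := pure_as_mixed s)) + t'" using assms(2) by linarith
qed

lemma tail_sum:
  assumes "finite (set_pmf p)"
  shows "sum (pmf p) {a\<in>set_pmf p. c<a} = 1 - tol_cdf p c"
proof -
  have e: "set_pmf p = {a\<in>set_pmf p. a \<le> c} \<union> {a\<in>set_pmf p. c<a}" by auto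
  have "1 = sum (pmf p) (set_pmf p)" using sum_pmf_eq_1[OF assms] by simp
  also have "\<dots> = sum (pmf p) {a\<in>set_pmf p. a \<le> c} + sum (pmf p) {a\<in>set_pmf p. c<a}"
    by (subst e, rule sum.union_disjoint) (use assms in auto)
  finally show ?thesis unfolding tol_cdf_def by simp
qed

theorem theorem2p3:
  fixes n :: nat and S :: "nat \<Rightarrow> 's set" and u :: "nat \<Rightarrow> (nat \<Rightarrow> 's) \<Rightarrow> real"
    and \<pi> \<pi>' :: "nat \<Rightarrow> real pmf" and \<sigma> :: "nat \<Rightarrow> 's \<Rightarrow> real"
  assumes "n \<ge> 1"
    and "\<forall>i\<in>{1..n}. finite (S i) \<and> S i \<noteq> {}"
    and "\<forall>i\<in>{1..n}. finite (set_pmf (\<pi> i)) \<and> set_pmf (\<pi> i) \<subseteq> {0..}"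
    and "\<forall>i\<in>{1..n}. finite (set_pmf (\<pi>' i)) \<and> set_pmf (\<pi>' i) \<subseteq> {0..}"
    and "\<forall>i\<in>{1..n}. stoch_dom (\<pi>' i) (\<pi> i)"
    and "tolerant_eq n S u \<pi> \<sigma>"
  shows "tolerant_eq n S u \<pi>' \<sigma>"
  unfolding tolerant_eq_def
proof (intro conjI ballI)
  fix i assume i: "i \<in> {1..n}"
  show "\<sigma> i \<in> mixed_strats (S i)" using assms(6) i unfolding tolerant_eq_def by blast
next
  fix i assume i: "i \<in> {1..n}"
  obtain g where g1: "\<forall>t\<in>set_pmf (\<pi> i). g t \<in> mixed_strats (S i) \<and>
            (\<forall>s\<in>S i. 0 < g t s \<longrightarrow> consistent n S u i s t \<sigma>)"
    and g2: "\<forall>s. (\<Sum>t\<in>set_pmf (\<pi> i). pmf (\<pi> i) t * g t s) = \<sigma> i s"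
    using assms(6) i unfolding tolerant_eq_def by blast
  define A where "A = set_pmf (\<pi> i)"
  define B where "B = set_pmf (\<pi>' i)"
  define p where "p = pmf (\<pi> i)"
  define q where "q = pmf (\<pi>' i)"
  have fA: "finite A" and fB: "finite B" and fS: "finite (S i)"
    using assms(2-4) i A_def B_def by auto
  have dom: "\<forall>c. sum p {a\<in>A. c<a} \<le> sum q {b\<in>B. c<b}"
    using tail_sum[of "\<pi> i"] tail_sum[of "\<pi>' i"] fA fB assms(5) i
    unfolding A_def B_def p_def q_def stoch_dom_def by auto
  have eq: "sum p A = sum q B" using sum_pmf_eq_1[of A "\<pi> i"] sum_pmf_eq_1[of B "\<pi>' i"] fA fB
    unfolding A_def B_def p_def q_def by simp
  obtain \<gamma> where
      c1: "\<forall>a b. 0 \<le> \<gamma> a b" and c2: "\<forall>a b. 0 < \<gamma> a b \<longrightarrow> a \<le> b"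
      and c3: "\<forall>a\<in>A. sum (\<gamma> a) B = p a" and c4: "\<forall>b\<in>B. (\<Sum>a\<in>A. \<gamma> a b) = q b"
    using coupling[OF fA fB _ _ eq dom] p_def q_def by auto
  have gm: "\<And>t. t \<in> A \<Longrightarrow> (\<forall>s. 0 \<le> g t s) \<and> (\<forall>s. s \<notin> S i \<longrightarrow> g t s = 0) \<and> sum (g t) (S i) = 1"
    using g1 unfolding A_def mixed_strats_def by blast
  define g' where "g' = (\<lambda>t' s. (\<Sum>t\<in>A. \<gamma> t t' * g t s) / q t')"
  have qpos: "\<And>b. b \<in> B \<Longrightarrow> 0 < q b" unfolding B_def q_def by (simp add: pmf_positive)
  show "\<exists>g :: real \<Rightarrow> 's \<Rightarrow> real.
        (\<forall>t\<in>set_pmf (\<pi>' i). g t \<in> mixed_strats (S i) \<and>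
            (\<forall>s\<in>S i. 0 < g t s \<longrightarrow> consistent n S u i s t \<sigma>)) \<and>
        (\<forall>s. (\<Sum>t\<in>set_pmf (\<pi>' i). pmf (\<pi>' i) t * g t s) = \<sigma> i s)"
  proof (rule exI[of _ g'], intro conjI ballI allI impI)
    fix t' assume t': "t' \<in> set_pmf (\<pi>' i)"
    hence tB: "t' \<in> B" using B_def by simp
    have nn: "\<forall>s. 0 \<le> g' t' s" unfolding g'_def using c1 gm qpos[OF tB]
      by (intro allI divide_nonneg_pos sum_nonneg) auto
    have zz: "\<forall>s. s \<notin> S i \<longrightarrow> g' t' s = 0" unfolding g'_def using gm by auto
    have "sum (g' t') (S i) = (\<Sum>t\<in>A. \<gamma> t t' * sum (g t) (S i)) / q t'"
      unfolding g'_def by (simp add: sum_divide_distrib[symmetric] sum_distrib_left sum.swap[of _ A])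
    also have "\<dots> = (\<Sum>t\<in>A. \<gamma> t t') / q t'" using gm by simp
    also have "\<dots> = 1" using c4 tB qpos[OF tB] by simp
    finally show "g' t' \<in> mixed_strats (S i)" using nn zz unfolding mixed_strats_def by blast
  next
    fix t' s assume t': "t' \<in> set_pmf (\<pi>' i)" and s: "s \<in> S i" and pos: "0 < g' t' s"
    hence tB: "t' \<in> B" using B_def by simp
    have "0 < (\<Sum>t\<in>A. \<gamma> t t' * g t s)" using pos qpos[OF tB] unfolding g'_def
      by (simp add: zero_less_divide_iff)
    have "\<exists>t\<in>A. 0 < \<gamma> t t' * g t s"
    proof (rule ccontr)
      assume "\<not> (\<exists>t\<in>A. 0 < \<gamma> t t' * g t s)"
      hence "\<forall>t\<in>A. \<gamma> t t' * g t s \<le> 0" by (auto simp: not_less)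
      hence "(\<Sum>t\<in>A. \<gamma> t t' * g t s) \<le> 0" by (intro sum_nonpos) auto
      thus False using \<open>0 < (\<Sum>t\<in>A. \<gamma> t t' * g t s)\<close> by linarith
    qed
    then obtain t where tA: "t \<in> A" and tp: "0 < \<gamma> t t' * g t s" by blast
    have ne: "\<gamma> t t' \<noteq> 0" "g t s \<noteq> 0" using tp by auto
    have "0 \<le> \<gamma> t t'" "0 \<le> g t s" using c1 gm[OF tA] by auto
    hence pos2: "0 < \<gamma> t t'" "0 < g t s" using ne by auto
    have le: "t \<le> t'" using c2 pos2(1) by blast
    have "consistent n S u i s t \<sigma>" using g1 tA s pos2(2) unfolding A_def by blast
    thus "consistent n S u i s t' \<sigma>" using le by (rule consistent_mono)
  next
    fix s
    have "(\<Sum>t'\<in>set_pmf (\<pi>' i). pmf (\<pi>' i) t' * g' t' s) = (\<Sum>t'\<in>B. \<Sum>t\<in>A. \<gamma> t t' * g t s)"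
      unfolding B_def[symmetric] q_def[symmetric] g'_def
      by (rule sum.cong) (auto dest: qpos)
    also have "\<dots> = (\<Sum>t\<in>A. sum (\<gamma> t) B * g t s)"
      by (simp add: sum.swap[of _ B] sum_distrib_right)
    also have "\<dots> = (\<Sum>t\<in>A. p t * g t s)" using c3 by simp
    also have "\<dots> = \<sigma> i s" using g2 A_def p_def by simp
    finally show "(\<Sum>t'\<in>set_pmf (\<pi>' i). pmf (\<pi>' i) t' * g' t' s) = \<sigma> i s" .
  qed
qed

end
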